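(* Let $\mathcal{T}$ be a smooth manifold with local coordinates $(t^a)$ carrying a Riemannian metric $h_{ab}(t)$ with Christoffel symbols $\chi^a_{bc}(t)$, and let $M$ be a smooth $n$-dimensional manifold with local coordinates $(x^i)$ carrying a semi-Riemannian metric $\varphi_{ij}(x)$ with Christoffel symbols $\gamma^k_{ij}(x)$. Let $m\neq0$, $e$ be real constants and $A^{(a)}_{(i)}(t,x)$ a smooth d-tensor on $\mathcal{T}\times M$. On $E^*=J^{1*}(\mathcal{T},M)$, with coordinates $(t^a,x^i,p^a_i)$, let $\frac{\delta}{\delta t^a}=\frac{\partial}{\partial t^a}-\chi^f_{ag}p^g_r\frac{\partial}{\partial p^f_r}$ and $\frac{\delta}{\delta x^i}=\frac{\partial}{\partial x^i}-\underset{2}{N}{}^{(f)}_{(r)i}\frac{\partial}{\partial p^f_r}$ with $\underset{2}{N}{}^{(f)}_{(r)i}=\gamma^s_{ri}\big[\frac{2e}{m}A^{(f)}_{(s)}-p^f_s\big]-\frac{e}{m}\big[\frac{\partial A^{(f)}_{(r)}}{\partial x^i}+\frac{\partial A^{(f)}_{(i)}}{\partial x^r}\big]$. Let $D$ be the linear connection on $E^*$ defined on the adapted frame $\{\frac{\delta}{\delta t^a},\frac{\delta}{\delta x^i},\frac{\partial}{\partial p^a_i}\}$ by \[ D_{\frac{\delta}{\delta t^c}}\tfrac{\delta}{\delta t^b}=\chi^a_{bc}\tfrac{\delta}{\delta t^a},\quad D_{\frac{\delta}{\delta t^c}}\tfrac{\delta}{\delta x^j}=0,\quad D_{\frac{\delta}{\delta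 t^c}}\tfrac{\partial}{\partial p^f_j}=\chi^b_{fc}\tfrac{\partial}{\partial p^b_j}, \] \[ D_{\frac{\delta}{\delta x^k}}\tfrac{\delta}{\delta t^b}=0,\quad D_{\frac{\delta}{\delta x^k}}\tfrac{\delta}{\delta x^j}=\gamma^i_{jk}\tfrac{\delta}{\delta x^i},\quad D_{\frac{\delta}{\delta x^k}}\tfrac{\partial}{\partial p^b_s}=-\gamma^s_{ik}\tfrac{\partial}{\partial p^b_i}, \] and $D_{\frac{\partial}{\partial p^c_k}}$ of every adapted frame vector equal to $0$. Let $R(X,Y)Z=D_XD_YZ-D_YD_XZ-D_{[X,Y]}Z$ and $\mathrm{Ric}(Y,Z)=\mathrm{tr}(X\mapsto R(X,Y)Z)$. Then the only (possibly) nonvanishing adapted components of $\mathrm{Ric}$ are \[ \mathrm{Ric}\big(\tfrac{\delta}{\delta t^a},\tfrac{\delta}{\delta t^b}\big)=\chi_{ab},\qquad \mathrm{Ric}\big(\tfrac{\delta}{\delta x^i},\tfrac{\delta}{\delta x^j}\big)=\mathfrak{R}_{ij}, \] where $\chi_{ab}(t)$ and $\mathfrak{R}_{ij}(x)$ are the classical Ricci tensors of $h_{ab}$ and $\varphi_{ij}$ (defined with the same curvature and trace conventions for their Levi-Civita connections); all adapted components of $\mathrm{Ric}$ involving a vertical vector $\frac{\partial}{\partial p^a_i}$ or mixing $\frac{\delta}{\delta t^a}$ with $\frac{\delta}{\delta x^i}$ vanish.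
   Context: Indices $a,b,c,d,f,g$ run from $1$ to $\dim\mathcal{T}$, indices $i,j,k,r,s$ from $1$ to $n$; Einstein summation convention. The fibre coordinates of $J^{1*}(\mathcal{T},M)$ transform as $\tilde p^a_i=\frac{\partial \tilde t^a}{\partial t^b}\frac{\partial x^j}{\partial \tilde x^i}p^b_j$. The connection $D$ is the one the paper calls the generalized Cartan canonical connection $C\Gamma(N)=(\chi^a_{bc},0,\gamma^i_{jk},0)$ of the autonomous multi-time Hamilton space of electrodynamics, and $\mathrm{Ric}$ is its Ricci tensor. *)

theory Defs
  imports "HOL-Analysis.Analysis"
begin

(* ---------------------------------------------------------------------
   Local-coordinate setting.
   'a : index type of the time coordinates t^a   (dim T = CARD('a))
   'i : index type of the space coordinates x^i  (n = CARD('i))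
   A point of E* = J^{1*}(T,M) over a chart is z = (t, x, p) with
   p $ a $ i = p^a_i.  Tangent vectors are elements of the same space.
   Adapted frame index:
     Inl a            ~  delta/delta t^a
     Inr (Inl i)      ~  delta/delta x^i
     Inr (Inr (a,i))  ~  partial/partial p^a_i
   --------------------------------------------------------------------- *)

type_synonym ('a,'i) pt = "(real^'a) \<times> (real^'i) \<times> (real^'i^'a)"
type_synonym ('a,'i) fidx = "'a + 'i + ('a \<times> 'i)"

fun Ck_on :: "nat \<Rightarrow> 'v::euclidean_space set \<Rightarrow> ('v \<Rightarrow> real) \<Rightarrow> bool" where
  "Ck_on 0 S f = continuous_on S f"
| "Ck_on (Suc k) S f = (f differentiable_on S \<and>
       (\<forall>v. Ck_on k S (\<lambda>z. frechet_derivative f (at z) v)))"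

definition smooth_on :: "'v::euclidean_space set \<Rightarrow> ('v \<Rightarrow> real) \<Rightarrow> bool" where
  "smooth_on S f \<longleftrightarrow> (\<forall>k. Ck_on k S f)"

definition pdir :: "('v::real_normed_vector \<Rightarrow> real) \<Rightarrow> 'v \<Rightarrow> 'v \<Rightarrow> real" where
  "pdir g z v = deriv (\<lambda>s. g (z + s *\<^sub>R v)) 0"

definition pd :: "(real^'n \<Rightarrow> real) \<Rightarrow> real^'n \<Rightarrow> 'n \<Rightarrow> real" where
  "pd f u k = pdir f u (axis k 1)"

(* Christoffel symbols Gamma^a_{bc} of a metric g (g a b u = g_{ab}(u)) *)
definition christoffel ::
  "('n::finite \<Rightarrow> 'n \<Rightarrow> real^'n \<Rightarrow> real) \<Rightarrow> 'n \<Rightarrow> 'n \<Rightarrow> 'n \<Rightarrow> real^'n \<Rightarrow> real" where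
  "christoffel g a b c u = 1/2 * (\<Sum>d\<in>UNIV. matrix_inv (\<chi> i j. g i j u) $ a $ d *
       (pd (g d c) u b + pd (g d b) u c - pd (g b c) u d))"

definition riemannian_metric :: "(real^'n) set \<Rightarrow> ('n::finite \<Rightarrow> 'n \<Rightarrow> real^'n \<Rightarrow> real) \<Rightarrow> bool" where
  "riemannian_metric U g \<longleftrightarrow> open U \<and> (\<forall>a b. smooth_on U (g a b)) \<and>
     (\<forall>u\<in>U. \<forall>a b. g a b u = g b a u) \<and>
     (\<forall>u\<in>U. \<forall>v::real^'n. v \<noteq> 0 \<longrightarrow> (\<Sum>a\<in>UNIV. \<Sum>b\<in>UNIV. g a b u * v$a * v$b) > 0)"

definition semi_riemannian_metric :: "(real^'n) set \<Rightarrow> ('n::finite \<Rightarrow> 'n \<Rightarrow> real^'n \<Rightarrow> real) \<Rightarrow> bool" where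
  "semi_riemannian_metric V g \<longleftrightarrow> open V \<and> (\<forall>a b. smooth_on V (g a b)) \<and>
     (\<forall>u\<in>V. \<forall>a b. g a b u = g b a u) \<and>
     (\<forall>u\<in>V. det (\<chi> i j. g i j u) \<noteq> 0)"

(* classical Ricci tensor Ric_{ab} = Ric(d_a, d_b) of the connection with
   nabla_{d_c} d_b = Chr a b c d_a, using R(X,Y)Z = D_X D_Y Z - D_Y D_X Z - D_[X,Y] Z
   and Ric(Y,Z) = tr(X |-> R(X,Y)Z) *)
definition ricci_tensor ::
  "('n::finite \<Rightarrow> 'n \<Rightarrow> 'n \<Rightarrow> real^'n \<Rightarrow> real) \<Rightarrow> real^'n \<Rightarrow> 'n \<Rightarrow> 'n \<Rightarrow> real" where
  "ricci_tensor Chr u a b = (\<Sum>c\<in>UNIV. pd (Chr c b a) u c - pd (Chr c b c) u a +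
       (\<Sum>e\<in>UNIV. Chr e b a u * Chr c e c u - Chr e b c u * Chr c e a u))"

(* M^{(f)}_{(r)b} = chi^f_{bg} p^g_r  (time part of the nonlinear connection) *)
definition Mcoef :: "('a::finite \<Rightarrow> 'a \<Rightarrow> 'a \<Rightarrow> real^'a \<Rightarrow> real) \<Rightarrow> 'a \<Rightarrow> 'i::finite \<Rightarrow> 'a \<Rightarrow> ('a,'i) pt \<Rightarrow> real" where
  "Mcoef chi f r b z = (\<Sum>g\<in>UNIV. chi f b g (fst z) * snd (snd z) $ g $ r)"

definition Ncoef :: "('i::finite \<Rightarrow> 'i \<Rightarrow> 'i \<Rightarrow> real^'i \<Rightarrow> real) \<Rightarrow>
    ('a::finite \<Rightarrow> 'i \<Rightarrow> real^'a \<Rightarrow> real^'i \<Rightarrow> real) \<Rightarrow> real \<Rightarrow> real \<Rightarrow>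
    'a \<Rightarrow> 'i \<Rightarrow> 'i \<Rightarrow> ('a,'i) pt \<Rightarrow> real" where
  "Ncoef gam A e m f r i z =
     (let t = fst z; x = fst (snd z); p = snd (snd z) in
      (\<Sum>s\<in>UNIV. gam s r i x * (2 * e / m * A f s t x - p $ f $ s))
      - e / m * (pd (A f r t) x i + pd (A f i t) x r))"

definition frame :: "('a::finite \<Rightarrow> 'a \<Rightarrow> 'a \<Rightarrow> real^'a \<Rightarrow> real) \<Rightarrow>
    ('i::finite \<Rightarrow> 'i \<Rightarrow> 'i \<Rightarrow> real^'i \<Rightarrow> real) \<Rightarrow>
    ('a \<Rightarrow> 'i \<Rightarrow> real^'a \<Rightarrow> real^'i \<Rightarrow> real) \<Rightarrow> real \<Rightarrow> real \<Rightarrow>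
    ('a,'i) fidx \<Rightarrow> ('a,'i) pt \<Rightarrow> ('a,'i) pt" where
  "frame chi gam A e m \<beta> z = (case \<beta> of
      Inl a \<Rightarrow> (axis a 1, 0, \<chi> f r. - Mcoef chi f r a z)
    | Inr (Inl i) \<Rightarrow> (0, axis i 1, \<chi> f r. - Ncoef gam A e m f r i z)
    | Inr (Inr (f, r)) \<Rightarrow> (0, 0, axis f (axis r 1)))"

(* the dual adapted coframe {dt^a, dx^i, delta p^a_i}: components of a tangent
   vector v at z with respect to the adapted frame *)
definition coframe :: "('a::finite \<Rightarrow> 'a \<Rightarrow> 'a \<Rightarrow> real^'a \<Rightarrow> real) \<Rightarrow>
    ('i::finite \<Rightarrow> 'i \<Rightarrow> 'i \<Rightarrow> real^'i \<Rightarrow> real) \<Rightarrow>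
    ('a \<Rightarrow> 'i \<Rightarrow> real^'a \<Rightarrow> real^'i \<Rightarrow> real) \<Rightarrow> real \<Rightarrow> real \<Rightarrow>
    ('a,'i) pt \<Rightarrow> ('a,'i) pt \<Rightarrow> ('a,'i) fidx \<Rightarrow> real" where
  "coframe chi gam A e m z v \<beta> = (case \<beta> of
      Inl a \<Rightarrow> fst v $ a
    | Inr (Inl i) \<Rightarrow> fst (snd v) $ i
    | Inr (Inr (f, r)) \<Rightarrow> snd (snd v) $ f $ r
          + (\<Sum>b\<in>UNIV. fst v $ b * Mcoef chi f r b z)
          + (\<Sum>j\<in>UNIV. fst (snd v) $ j * Ncoef gam A e m f r j z))"

(* connection coefficients: conn chi gam z beta gamma delta is the
   delta-component of D_{E_beta} E_gamma (generalized Cartan canonical connection) *)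
definition conn :: "('a::finite \<Rightarrow> 'a \<Rightarrow> 'a \<Rightarrow> real^'a \<Rightarrow> real) \<Rightarrow>
    ('i::finite \<Rightarrow> 'i \<Rightarrow> 'i \<Rightarrow> real^'i \<Rightarrow> real) \<Rightarrow>
    ('a,'i) pt \<Rightarrow> ('a,'i) fidx \<Rightarrow> ('a,'i) fidx \<Rightarrow> ('a,'i) fidx \<Rightarrow> real" where
  "conn chi gam z \<beta> \<gamma> \<delta> = (case \<beta> of
      Inl c \<Rightarrow>
        (case \<gamma> of
           Inl b \<Rightarrow> (case \<delta> of Inl a \<Rightarrow> chi a b c (fst z) | _ \<Rightarrow> 0)
         | Inr (Inl j) \<Rightarrow> 0
         | Inr (Inr (f, j)) \<Rightarrow>
             (case \<delta> of Inr (Inr (b, j')) \<Rightarrow> (if j' = j then chi b f c (fst z) else 0)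
                     | _ \<Rightarrow> 0))
    | Inr (Inl k) \<Rightarrow>
        (case \<gamma> of
           Inl b \<Rightarrow> 0
         | Inr (Inl j) \<Rightarrow> (case \<delta> of Inr (Inl i) \<Rightarrow> gam i j k (fst (snd z)) | _ \<Rightarrow> 0)
         | Inr (Inr (b, s)) \<Rightarrow>
             (case \<delta> of Inr (Inr (b', i)) \<Rightarrow> (if b' = b then - gam s i k (fst (snd z)) else 0)
                     | _ \<Rightarrow> 0))
    | Inr (Inr _) \<Rightarrow> 0)"

(* D_X Y for vector fields X, Y on E*, extending the frame values by
   linearity and the Leibniz rule *)
definition covD :: "('a::finite \<Rightarrow> 'a \<Rightarrow> 'a \<Rightarrow> real^'a \<Rightarrow> real) \<Rightarrow>
    ('i::finite \<Rightarrow> 'i \<Rightarrow> 'i \<Rightarrow> real^'i \<Rightarrow> real) \<Rightarrow>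
    ('a \<Rightarrow> 'i \<Rightarrow> real^'a \<Rightarrow> real^'i \<Rightarrow> real) \<Rightarrow> real \<Rightarrow> real \<Rightarrow>
    (('a,'i) pt \<Rightarrow> ('a,'i) pt) \<Rightarrow> (('a,'i) pt \<Rightarrow> ('a,'i) pt) \<Rightarrow> ('a,'i) pt \<Rightarrow> ('a,'i) pt" where
  "covD chi gam A e m X Y z =
     (\<Sum>\<delta>\<in>UNIV. (pdir (\<lambda>w. coframe chi gam A e m w (Y w) \<delta>) z (X z)
        + (\<Sum>\<beta>\<in>UNIV. \<Sum>\<gamma>\<in>UNIV. coframe chi gam A e m z (X z) \<beta> *
              coframe chi gam A e m z (Y z) \<gamma> * conn chi gam z \<beta> \<gamma> \<delta>))
      *\<^sub>R frame chi gam A e m \<delta> z)"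

definition lie :: "(('a::finite,'i::finite) pt \<Rightarrow> ('a,'i) pt) \<Rightarrow> (('a,'i) pt \<Rightarrow> ('a,'i) pt) \<Rightarrow>
    ('a,'i) pt \<Rightarrow> ('a,'i) pt" where
  "lie X Y z =
     ((\<chi> a. pdir (\<lambda>w. fst (Y w) $ a) z (X z) - pdir (\<lambda>w. fst (X w) $ a) z (Y z)),
      (\<chi> i. pdir (\<lambda>w. fst (snd (Y w)) $ i) z (X z) - pdir (\<lambda>w. fst (snd (X w)) $ i) z (Y z)),
      (\<chi> f r. pdir (\<lambda>w. snd (snd (Y w)) $ f $ r) z (X z)
             - pdir (\<lambda>w. snd (snd (X w)) $ f $ r) z (Y z)))"

definition curv :: "('a::finite \<Rightarrow> 'a \<Rightarrow> 'a \<Rightarrow> real^'a \<Rightarrow> real) \<Rightarrow>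
    ('i::finite \<Rightarrow> 'i \<Rightarrow> 'i \<Rightarrow> real^'i \<Rightarrow> real) \<Rightarrow>
    ('a \<Rightarrow> 'i \<Rightarrow> real^'a \<Rightarrow> real^'i \<Rightarrow> real) \<Rightarrow> real \<Rightarrow> real \<Rightarrow>
    (('a,'i) pt \<Rightarrow> ('a,'i) pt) \<Rightarrow> (('a,'i) pt \<Rightarrow> ('a,'i) pt) \<Rightarrow> (('a,'i) pt \<Rightarrow> ('a,'i) pt) \<Rightarrow>
    ('a,'i) pt \<Rightarrow> ('a,'i) pt" where
  "curv chi gam A e m X Y Z z =
     covD chi gam A e m X (covD chi gam A e m Y Z) z
     - covD chi gam A e m Y (covD chi gam A e m X Z) z
     - covD chi gam A e m (lie X Y) Z z"

definition ric :: "('a::finite \<Rightarrow> 'a \<Rightarrow> 'a \<Rightarrow> real^'a \<Rightarrow> real) \<Rightarrow>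
    ('i::finite \<Rightarrow> 'i \<Rightarrow> 'i \<Rightarrow> real^'i \<Rightarrow> real) \<Rightarrow>
    ('a \<Rightarrow> 'i \<Rightarrow> real^'a \<Rightarrow> real^'i \<Rightarrow> real) \<Rightarrow> real \<Rightarrow> real \<Rightarrow>
    (('a,'i) pt \<Rightarrow> ('a,'i) pt) \<Rightarrow> (('a,'i) pt \<Rightarrow> ('a,'i) pt) \<Rightarrow> ('a,'i) pt \<Rightarrow> real" where
  "ric chi gam A e m Y Z z =
     (\<Sum>\<alpha>\<in>UNIV. coframe chi gam A e m z
        (curv chi gam A e m (frame chi gam A e m \<alpha>) Y Z z) \<alpha>)"

end

theory Submission
  imports Defs
begin



lemma sumU: "sum f (UNIV::('x::finite + 'y::finite) set) = sum (\<lambda>x. f (Inl x)) UNIV + sum (\<lambda>y. f (Inr y)) UNIV"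
  using sum.Plus[of "UNIV::'x set" "UNIV::'y set" f] by (simp add: comp_def)

lemma cof_lin: "linear (\<lambda>v. coframe chi gam A e m z v \<gamma>)"
  by (rule linearI) (auto simp: coframe_def algebra_simps sum.distrib sum_distrib_left split: sum.splits prod.splits)

lemma delta_mult: "(\<Sum>b\<in>UNIV. (if b = (x::_::finite) then 1 else 0) * (f b::real)) = f x"
proof -
  have "(\<Sum>b\<in>UNIV. (if b = x then 1 else 0) * (f b::real)) = (\<Sum>b\<in>UNIV. if b = x then f b else 0)"
    by (rule sum.cong) auto
  then show ?thesis by simp
qed

lemma cof_frame: "coframe chi gam A e m w (frame chi gam A e m \<delta> w) \<gamma> = (if \<gamma> = \<delta> then 1 else 0)"
  by (auto simp: coframe_def frame_def axis_def delta_mult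
      split: sum.splits prod.splits)

lemma cof_comb: "coframe chi gam A e m z (\<Sum>\<delta>\<in>UNIV. c \<delta> *\<^sub>R frame chi gam A e m \<delta> z) \<gamma> = c \<gamma>"
proof -
  have "coframe chi gam A e m z (\<Sum>\<delta>\<in>UNIV. c \<delta> *\<^sub>R frame chi gam A e m \<delta> z) \<gamma>
     = (\<Sum>\<delta>\<in>UNIV. c \<delta> * coframe chi gam A e m z (frame chi gam A e m \<delta> z) \<gamma>)"
    by (simp add: linear_sum[OF cof_lin] linear_scale[OF cof_lin] comp_def)
  also have "\<dots> = c \<gamma>" by (simp add: cof_frame if_distrib[of "\<lambda>x. _ * x"] cong: if_cong)
  finally show ?thesis .
qed



lemma pdir_const: "pdir (\<lambda>w. c) z v = 0"
  by (simp add: pdir_def)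

lemma covD_frame: "covD chi gam A e m (frame chi gam A e m \<alpha>) Y z =
  (\<Sum>\<delta>\<in>UNIV. (pdir (\<lambda>w. coframe chi gam A e m w (Y w) \<delta>) z (frame chi gam A e m \<alpha> z)
     + (\<Sum>\<gamma>\<in>UNIV. coframe chi gam A e m z (Y z) \<gamma> * conn chi gam z \<alpha> \<gamma> \<delta>)) *\<^sub>R frame chi gam A e m \<delta> z)"
  unfolding covD_def by (simp add: cof_frame if_distrib[of "\<lambda>x. x * _"] sum.swap[of _ "UNIV::('a+'b+'a\<times>'b) set"] cong: if_cong)

lemma covD_ff: "covD chi gam A e m (frame chi gam A e m \<alpha>) (frame chi gam A e m \<gamma>) z =
  (\<Sum>\<delta>\<in>UNIV. conn chi gam z \<alpha> \<gamma> \<delta> *\<^sub>R frame chi gam A e m \<delta> z)"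
  unfolding covD_frame by (simp add: cof_frame pdir_const if_distrib[of "\<lambda>x. x * _"] cong: if_cong)

lemma covD_fff: "covD chi gam A e m (frame chi gam A e m \<alpha>) (covD chi gam A e m (frame chi gam A e m \<beta>) (frame chi gam A e m \<gamma>)) z =
  (\<Sum>\<delta>\<in>UNIV. (pdir (\<lambda>w. conn chi gam w \<beta> \<gamma> \<delta>) z (frame chi gam A e m \<alpha> z)
     + (\<Sum>\<epsilon>\<in>UNIV. conn chi gam z \<beta> \<gamma> \<epsilon> * conn chi gam z \<alpha> \<epsilon> \<delta>)) *\<^sub>R frame chi gam A e m \<delta> z)"
  unfolding covD_frame[of _ _ _ _ _ \<alpha>] covD_ff cof_comb by simp

lemma covD_lie: "covD chi gam A e m (lie (frame chi gam A e m \<alpha>) (frame chi gam A e m \<beta>)) (frame chi gam A e m \<gamma>) z = 0"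
proof -
  have H: "\<And>\<beta>' \<delta> x \<gamma>'. coframe chi gam A e m z (lie (frame chi gam A e m \<alpha>) (frame chi gam A e m \<beta>) z) \<beta>' * x * conn chi gam z \<beta>' \<gamma>' \<delta> = 0"
    by (auto simp: coframe_def conn_def lie_def frame_def pdir_const split: sum.splits prod.splits)
  show ?thesis unfolding covD_def by (simp add: cof_frame pdir_const H)
qed

lemma ric_formula: "ric chi gam A e m (frame chi gam A e m \<beta>) (frame chi gam A e m \<gamma>) z =
  (\<Sum>\<alpha>\<in>UNIV. pdir (\<lambda>w. conn chi gam w \<beta> \<gamma> \<alpha>) z (frame chi gam A e m \<alpha> z)
     + (\<Sum>\<epsilon>\<in>UNIV. conn chi gam z \<beta> \<gamma> \<epsilon> * conn chi gam z \<alpha> \<epsilon> \<alpha>)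
     - pdir (\<lambda>w. conn chi gam w \<alpha> \<gamma> \<alpha>) z (frame chi gam A e m \<beta> z)
     - (\<Sum>\<epsilon>\<in>UNIV. conn chi gam z \<alpha> \<gamma> \<epsilon> * conn chi gam z \<beta> \<epsilon> \<alpha>))"
  unfolding ric_def curv_def covD_lie covD_fff
  by (simp add: linear_diff[OF cof_lin] cof_comb diff_diff_eq)



lemma conn_dep: "conn chi gam w \<beta> \<gamma> \<delta> = conn chi gam (fst w, fst (snd w), 0) \<beta> \<gamma> \<delta>"
  by (simp add: conn_def split: sum.splits prod.splits)

lemma pdir_p: "pdir (\<lambda>w. conn chi gam w \<beta> \<gamma> \<delta>) z (frame chi gam A e m (Inr (Inr q)) z) = 0"
  unfolding pdir_def by (subst conn_dep) (simp add: frame_def case_prod_beta)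

lemma pdir_tt: "pdir (\<lambda>w. F (fst w)) z (frame chi gam A e m (Inl c) z) = pd F (fst z) c"
  by (simp add: pdir_def pd_def frame_def)
lemma pdir_tx: "pdir (\<lambda>w. F (fst w)) z (frame chi gam A e m (Inr q) z) = 0"
  by (simp add: pdir_def frame_def split: sum.splits prod.splits)
lemma pdir_xx: "pdir (\<lambda>w. F (fst (snd w))) z (frame chi gam A e m (Inr (Inl k)) z) = pd F (fst (snd z)) k"
  by (simp add: pdir_def pd_def frame_def)
lemma pdir_xt: "pdir (\<lambda>w. F (fst (snd w))) z (frame chi gam A e m (Inl c) z) = 0"
  by (simp add: pdir_def frame_def)

lemma pdir_xp: "pdir (\<lambda>w. F (fst (snd w))) z (frame chi gam A e m (Inr (Inr q)) z) = 0"
  by (simp add: pdir_def frame_def case_prod_beta)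

context
  fixes chi :: "'a::finite \<Rightarrow> 'a \<Rightarrow> 'a \<Rightarrow> real^'a \<Rightarrow> real"
    and gam :: "'i::finite \<Rightarrow> 'i \<Rightarrow> 'i \<Rightarrow> real^'i \<Rightarrow> real"
begin
lemma c1: "conn chi gam w (Inr (Inr q)) \<gamma> \<delta> = 0" by (simp add: conn_def)
lemma c2: "conn chi gam w (Inl c) (Inl b) (Inl a) = chi a b c (fst w)" by (simp add: conn_def)
lemma c3: "conn chi gam w \<beta> (Inl b) (Inr q) = 0" by (simp add: conn_def split: sum.splits prod.splits)
lemma c4: "conn chi gam w \<beta> (Inr (Inl j)) (Inl a) = 0" by (simp add: conn_def split: sum.splits prod.splits)
lemma c5: "conn chi gam w \<beta> (Inr (Inl j)) (Inr (Inr q)) = 0" by (simp add: conn_def split: sum.splits prod.splits)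
lemma c6: "conn chi gam w \<beta> (Inr (Inr q)) (Inl a) = 0" by (simp add: conn_def split: sum.splits prod.splits)
lemma c7: "conn chi gam w \<beta> (Inr (Inr q)) (Inr (Inl i)) = 0" by (simp add: conn_def split: sum.splits prod.splits)
lemma c8: "conn chi gam w (Inl c) (Inr (Inl j)) \<delta> = 0" by (simp add: conn_def)
lemma c9: "conn chi gam w (Inr (Inl k)) (Inl b) \<delta> = 0" by (simp add: conn_def)
lemma c10: "conn chi gam w (Inr (Inl k)) (Inr (Inl j)) (Inr (Inl i)) = gam i j k (fst (snd w))" by (simp add: conn_def)
end

lemmas cs = c1 c2 c3 c4 c5 c6 c7 c8 c9 c10

lemma vert_term: "pdir (\<lambda>w. conn chi gam w \<beta> \<gamma> (Inr (Inr q))) z (frame chi gam A e m (Inr (Inr q)) z)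
     + (\<Sum>\<epsilon>\<in>UNIV. conn chi gam z \<beta> \<gamma> \<epsilon> * conn chi gam z (Inr (Inr q)) \<epsilon> (Inr (Inr q)))
     - pdir (\<lambda>w. conn chi gam w (Inr (Inr q)) \<gamma> (Inr (Inr q))) z (frame chi gam A e m \<beta> z)
     - (\<Sum>\<epsilon>\<in>UNIV. conn chi gam z (Inr (Inr q)) \<gamma> \<epsilon> * conn chi gam z \<beta> \<epsilon> (Inr (Inr q))) = 0"
  by (simp add: pdir_p c1 pdir_const)

lemma sum3: "sum f (UNIV::('x::finite + 'y::finite + 'z::finite) set) = sum (\<lambda>a. f (Inl a)) UNIV + sum (\<lambda>k. f (Inr (Inl k))) UNIV + sum (\<lambda>q. f (Inr (Inr q))) UNIV"
  by (simp add: sumU add.assoc)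

definition Tm where "Tm chi gam A e m \<beta> \<gamma> z \<alpha> = 
     pdir (\<lambda>w. conn chi gam w \<beta> \<gamma> \<alpha>) z (frame chi gam A e m \<alpha> z)
     + (\<Sum>\<epsilon>\<in>UNIV. conn chi gam z \<beta> \<gamma> \<epsilon> * conn chi gam z \<alpha> \<epsilon> \<alpha>)
     - pdir (\<lambda>w. conn chi gam w \<alpha> \<gamma> \<alpha>) z (frame chi gam A e m \<beta> z)
     - (\<Sum>\<epsilon>\<in>UNIV. conn chi gam z \<alpha> \<gamma> \<epsilon> * conn chi gam z \<beta> \<epsilon> \<alpha>)"

lemma ric2: "ric chi gam A e m (frame chi gam A e m \<beta>) (frame chi gam A e m \<gamma>) z =
   (\<Sum>a\<in>UNIV. Tm chi gam A e m \<beta> \<gamma> z (Inl a)) + (\<Sum>k\<in>UNIV. Tm chi gam A e m \<beta> \<gamma> z (Inr (Inl k)))"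
proof -
  have "ric chi gam A e m (frame chi gam A e m \<beta>) (frame chi gam A e m \<gamma>) z = sum (Tm chi gam A e m \<beta> \<gamma> z) UNIV"
    unfolding ric_formula Tm_def ..
  also have "\<dots> = (\<Sum>a\<in>UNIV. Tm chi gam A e m \<beta> \<gamma> z (Inl a)) + (\<Sum>k\<in>UNIV. Tm chi gam A e m \<beta> \<gamma> z (Inr (Inl k)))"
    unfolding sum3 by (simp add: Tm_def vert_term)
  finally show ?thesis .
qed

lemma shape3: obtains a where "\<beta> = Inl a" | k where "\<beta> = Inr (Inl k)" | q where "\<beta> = Inr (Inr q)"
  by (metis sum.exhaust)

lemmas Tsimps = ric2 Tm_def sum3 cs pdir_tt pdir_tx pdir_xx pdir_xt pdir_xp pdir_p pdir_const

lemma main: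
  "ric chi gam A e m (frame chi gam A e m \<beta>) (frame chi gam A e m \<gamma>) (t, x, p) =
           (case (\<beta>, \<gamma>) of
              (Inl a, Inl b) \<Rightarrow> ricci_tensor chi t a b
            | (Inr (Inl i), Inr (Inl j)) \<Rightarrow> ricci_tensor gam x i j
            | _ \<Rightarrow> 0)"
proof (cases \<beta> rule: shape3)
  case 1 then show ?thesis
  proof (cases \<gamma> rule: shape3)
    case 1 then show ?thesis using \<open>\<beta> = _\<close> by (simp add: Tsimps ricci_tensor_def sum.distrib sum_subtractf)
  next
    case 2 then show ?thesis using \<open>\<beta> = _\<close> by (simp add: Tsimps)
  next
    case 3 then show ?thesis using \<open>\<beta> = _\<close> by (simp add: Tsimps)
  qed
next
  case 2 then show ?thesis
  proof (cases \<gamma> rule: shape3)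
    case 1 then show ?thesis using \<open>\<beta> = _\<close> by (simp add: Tsimps)
  next
    case 2 then show ?thesis using \<open>\<beta> = _\<close> by (simp add: Tsimps ricci_tensor_def sum.distrib sum_subtractf)
  next
    case 3 then show ?thesis using \<open>\<beta> = _\<close> by (simp add: Tsimps)
  qed
next
  case 3 then show ?thesis
  proof (cases \<gamma> rule: shape3)
    case 1 then show ?thesis using \<open>\<beta> = _\<close> by (simp add: Tsimps)
  next
    case 2 then show ?thesis using \<open>\<beta> = _\<close> by (simp add: Tsimps)
  next
    case 3 then show ?thesis using \<open>\<beta> = _\<close> by (simp add: Tsimps)
  qed
qed


theorem mainTheorem3:
  fixes U :: "(real^'a::finite) set" and V :: "(real^'i::finite) set"
    and h :: "'a \<Rightarrow> 'a \<Rightarrow> real^'a \<Rightarrow> real"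
    and \<phi> :: "'i \<Rightarrow> 'i \<Rightarrow> real^'i \<Rightarrow> real"
    and chi :: "'a \<Rightarrow> 'a \<Rightarrow> 'a \<Rightarrow> real^'a \<Rightarrow> real"
    and gam :: "'i \<Rightarrow> 'i \<Rightarrow> 'i \<Rightarrow> real^'i \<Rightarrow> real"
    and A :: "'a \<Rightarrow> 'i \<Rightarrow> real^'a \<Rightarrow> real^'i \<Rightarrow> real"
    and m e :: real
  assumes h_metric: "riemannian_metric U h"
    and chi_def: "\<forall>t\<in>U. \<forall>a b c. chi a b c t = christoffel h a b c t"
    and phi_metric: "semi_riemannian_metric V \<phi>"
    and gam_def: "\<forall>x\<in>V. \<forall>i j k. gam i j k x = christoffel \<phi> i j k x"
    and m_nz: "m \<noteq> 0"
    and A_smooth: "\<forall>a i. smooth_on (U \<times> V) (\<lambda>(t, x). A a i t x)"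
  shows "\<forall>t\<in>U. \<forall>x\<in>V. \<forall>p \<beta> \<gamma>.
           ric chi gam A e m (frame chi gam A e m \<beta>) (frame chi gam A e m \<gamma>) (t, x, p) =
           (case (\<beta>, \<gamma>) of
              (Inl a, Inl b) \<Rightarrow> ricci_tensor chi t a b
            | (Inr (Inl i), Inr (Inl j)) \<Rightarrow> ricci_tensor gam x i j
            | _ \<Rightarrow> 0)"
  by (intro ballI allI) (rule main)

end
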